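(* Suppose Assumption 1 holds. Let $N\ge 1$, let $\Phi_N:\Xi\to\mathbb{R}^N$ be any feature map and let $W^\star(x)$ be a minimizer of $G_{\Phi_N}(x,\cdot)$. Then for every $x\in\mathbb{R}^{d_x}$, $$\|\nabla F(x)-\nabla F_{\Phi_N}(x)\|\le K\cdot \mathbb{E}_{\xi\sim\mathbb{P}_\xi}\big\|W^\star(x)\Phi_N(\xi)-y^\star(x,\xi)\big\|,$$ where $K = L_{f,1} + \frac{L_{g,2} L_{f,0}}{\mu} + \frac{L_{g,2} L_{g,1} L_{f,0}}{\mu^2} + \frac{L_{f,1} L_{g, 1}}{\mu}$.
   Context: Setting. Let $d_x,d_y,d_\xi,d_\eta\ge 1$. Let $(\xi,\eta)$ be a random vector in $\mathbb{R}^{d_\xi}\times\mathbb{R}^{d_\eta}$ with joint law $\mathbb{P}_{(\xi,\eta)}$; $\mathbb{P}_\xi$ is the marginal law of $\xi$, with support $\Xi\subseteq\mathbb{R}^{d_\xi}$, and $\mathbb{P}_{\eta|\xi}$ the conditional law of $\eta$ given $\xi$. Let $f,g:\mathbb{R}^{d_x}\times\mathbb{R}^{d_y}\times\Xi\times\mathbb{R}^{d_\eta}\to\mathbb{R}$ be twice differentiable in $(x,y)$. Put $G(x,y,\xi)=\mathbb{E}_{\eta\sim\mathbb{P}_{\eta|\xi}}[g(x,y,\xi,\eta)]$, $y^\star(x,\xi)=\arg\min_{y\in\mathbb{R}^{d_y}}G(x,y,\xi)$, and $F(x)=\mathbb{E}_{(\xi,\eta)}[f(x,y^\star(x,\xi),\xi,\eta)]$.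 $\nabla_1,\nabla_2$ denote partial gradients in $x$ and $y$; $\nabla^2_{12},\nabla^2_{22}$ the corresponding blocks of the Hessian. $\|\cdot\|$ is the Euclidean norm for vectors and the spectral norm for matrices. The variance of a random vector/matrix $X$ is $\mathbb{E}\|X-\mathbb{E}X\|^2$. Assumption 1: (i) $f,\nabla f,\nabla g,\nabla^2 g$ (derivatives in $(x,y)$) are $L_{f,0},L_{f,1},L_{g,1},L_{g,2}$-Lipschitz in $(x,y)$ for every fixed $(\xi,\eta)$; (ii) $g$ is $\mu$-strongly convex in $y$ ($\mu>0$) for all $(x,\xi,\eta)$; (iii) for $\eta\sim\mathbb{P}_{\eta|\xi}$, $\nabla f,\nabla g,\nabla^2 g$ are unbiased estimators of the corresponding derivatives of $\mathbb{E}_{\eta|\xi}f$, $G$, with (conditional) variances bounded by $\sigma_f^2,\sigma_{g,1}^2,\sigma_{g,2}^2$ uniformly in $x,y,\xi$. Basis notation. For a feature map $\Phi_N:\Xi\to\mathbb{R}^N$ and $W\in\mathbb{R}^{d_y\times N}$, set $f_{\Phi_N}(x,W,\xi,\eta)=f(x,W\Phi_N(\xi),\xi,\eta)$, $g_{\Phi_N}(x,W,\xi,\eta)=g(x,W\Phi_N(\xi),\xi,\eta)$, $G_{\Phi_N}(x,W)=\mathbb{E}_{(\xi,\eta)}[g_{\Phi_N}(x,W,\xi,\eta)]$, $W^\star(x)\in\arg\min_W G_{\Phi_N}(x,W)$, $F_{\Phi_N}(x)=\mathbb{E}_{(\xi,\eta)}[f_{\Phi_N}(x,W^\star(x),\xi,\eta)]$.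 Hypergradients. Here $\nabla F(x)$ and $\nabla F_{\Phi_N}(x)$ denote $\nabla F(x)=\mathbb{E}_{(\xi,\eta)}\big[\nabla_1 f(x,\bar y,\xi,\eta)-\nabla^2_{12}g(x,\bar y,\xi,\eta)[\nabla^2_{22}g(x,\bar y,\xi,\eta)]^{-1}\nabla_2 f(x,\bar y,\xi,\eta)\big]$ with $\bar y=y^\star(x,\xi)$, and $\nabla F_{\Phi_N}(x)$ is the same expression with $\bar y=W^\star(x)\Phi_N(\xi)$. *)

theory Defs
  imports "HOL-Probability.Probability"
begin

definition grad :: "('a::euclidean_space \<Rightarrow> real) \<Rightarrow> 'a \<Rightarrow> 'a" where
  "grad h p = (\<Sum>b\<in>Basis. frechet_derivative h (at p) b *\<^sub>R b)"

definition hess :: "('a::euclidean_space \<Rightarrow> real) \<Rightarrow> 'a \<Rightarrow> 'a \<Rightarrow> 'a" where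
  "hess h p = frechet_derivative (grad h) (at p)"

definition grad1 :: "((real^'n) \<times> (real^'m) \<Rightarrow> real) \<Rightarrow> (real^'n) \<times> (real^'m) \<Rightarrow> real^'n" where
  "grad1 h p = fst (grad h p)"
definition grad2 :: "((real^'n) \<times> (real^'m) \<Rightarrow> real) \<Rightarrow> (real^'n) \<times> (real^'m) \<Rightarrow> real^'m" where
  "grad2 h p = snd (grad h p)"
definition hess12 :: "((real^'n) \<times> (real^'m) \<Rightarrow> real) \<Rightarrow> (real^'n) \<times> (real^'m) \<Rightarrow> real^'m^'n" where
  "hess12 h p = matrix (\<lambda>v. fst (hess h p (0, v)))"
definition hess22 :: "((real^'n) \<times> (real^'m) \<Rightarrow> real) \<Rightarrow> (real^'n) \<times> (real^'m) \<Rightarrow> real^'m^'m" where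
  "hess22 h p = matrix (\<lambda>v. snd (hess h p (0, v)))"

definition sec :: "('x \<Rightarrow> 'y \<Rightarrow> 'c \<Rightarrow> 'e \<Rightarrow> real) \<Rightarrow> 'c \<Rightarrow> 'e \<Rightarrow> 'x \<times> 'y \<Rightarrow> real" where
  "sec f \<xi> \<eta> = (\<lambda>(x, y). f x y \<xi> \<eta>)"

definition strongly_convex_on :: "real \<Rightarrow> 'a::real_normed_vector set \<Rightarrow> ('a \<Rightarrow> real) \<Rightarrow> bool" where
  "strongly_convex_on \<mu> S h \<longleftrightarrow> convex S \<and> (\<forall>u\<in>S. \<forall>v\<in>S. \<forall>t::real. 0 \<le> t \<and> t \<le> 1 \<longrightarrow>
     h (t *\<^sub>R u + (1 - t) *\<^sub>R v) \<le> t * h u + (1 - t) * h v - \<mu> / 2 * t * (1 - t) * (norm (u - v))\<^sup>2)"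

definition msupport :: "'a::metric_space measure \<Rightarrow> 'a set" where
  "msupport M = {z. \<forall>e>0. emeasure M (ball z e) > 0}"

definition hyper_integrand ::
  "(real^'x \<Rightarrow> real^'y \<Rightarrow> 'c \<Rightarrow> 'e \<Rightarrow> real) \<Rightarrow> (real^'x \<Rightarrow> real^'y \<Rightarrow> 'c \<Rightarrow> 'e \<Rightarrow> real)
    \<Rightarrow> real^'x \<Rightarrow> real^'y \<Rightarrow> 'c \<Rightarrow> 'e \<Rightarrow> real^'x" where
  "hyper_integrand f g x y \<xi> \<eta> =
     grad1 (sec f \<xi> \<eta>) (x, y)
     - hess12 (sec g \<xi> \<eta>) (x, y) *v (matrix_inv (hess22 (sec g \<xi> \<eta>) (x, y)) *v grad2 (sec f \<xi> \<eta>) (x, y))"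

definition hypergrad ::
  "('c \<times> 'e) measure \<Rightarrow> (real^'x \<Rightarrow> real^'y \<Rightarrow> 'c \<Rightarrow> 'e \<Rightarrow> real) \<Rightarrow> (real^'x \<Rightarrow> real^'y \<Rightarrow> 'c \<Rightarrow> 'e \<Rightarrow> real)
    \<Rightarrow> real^'x \<Rightarrow> ('c \<Rightarrow> real^'y) \<Rightarrow> real^'x" where
  "hypergrad P f g x ybar = (\<integral>z. hyper_integrand f g x (ybar (fst z)) (fst z) (snd z) \<partial>P)"

end

theory Submission
  imports Defs
begin

lemma le_eps_mult:
  fixes a b C :: real
  assumes "C \<ge> 0" "\<And>e. e > 0 \<Longrightarrow> a \<le> b + e * C"
  shows "a \<le> b"
proof (rule field_le_epsilon)
  fix e :: real assume e: "e > 0"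
  have "e / (C + 1) > 0" using assms e by simp
  then have "a \<le> b + (e / (C + 1)) * C" using assms(2) by blast
  also have "(e / (C + 1)) * C \<le> e" using assms e by (simp add: field_simps)
  finally show "a \<le> b + e" by simp
qed

lemma deriv_lip_bound:
  fixes F :: "'a::real_normed_vector \<Rightarrow> 'b::real_normed_vector"
  assumes D: "(F has_derivative D) (at p)" and L: "L-lipschitz_on UNIV F"
  shows "norm (D w) \<le> L * norm w"
proof -
  have bl: "bounded_linear D" using D by (simp add: has_derivative_at_alt)
  then interpret bounded_linear D .
  show ?thesis
  proof (rule le_eps_mult[where C = "norm w"])
    fix e :: real assume e: "e > 0"
    obtain d where d: "d > 0" "\<forall>y. norm (y - p) < d \<longrightarrow> norm (F y - F p - D (y - p)) \<le> e * norm (y - p)"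
      using D e unfolding has_derivative_at_alt by blast
    show "norm (D w) \<le> L * norm w + e * norm w"
    proof (cases "w = 0")
      case True then show ?thesis by (simp add: zero)
    next
      case False
      define s where "s = d / (2 * norm w)"
      have s0: "s > 0" using d False by (simp add: s_def)
      have sd: "norm (s *\<^sub>R w) < d" using d False by (simp add: s_def)
      have 1: "norm (F (p + s *\<^sub>R w) - F p - D (s *\<^sub>R w)) \<le> e * (s * norm w)"
        using d(2)[rule_format, of "p + s *\<^sub>R w"] sd s0 by simp
      have 2: "norm (F (p + s *\<^sub>R w) - F p) \<le> L * (s * norm w)"
        using lipschitz_onD[OF L, of "p + s *\<^sub>R w" p] s0 by (simp add: dist_norm)
      have "D (s *\<^sub>R w) = (F (p + s *\<^sub>R w) - F p) - (F (p + s *\<^sub>R w) - F p - D (s *\<^sub>R w))"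
        by simp
      then have "norm (D (s *\<^sub>R w)) \<le> norm (F (p + s *\<^sub>R w) - F p) + norm (F (p + s *\<^sub>R w) - F p - D (s *\<^sub>R w))"
        by (metis norm_triangle_ineq4)
      then have "s * norm (D w) \<le> s * (L * norm w + e * norm w)"
        using 1 2 s0 by (simp add: scale algebra_simps)
      then show ?thesis using s0 by simp
    qed
  qed simp
qed

lemma grad_inner:
  fixes h :: "'a::euclidean_space \<Rightarrow> real"
  assumes "h differentiable at p"
  shows "frechet_derivative h (at p) w = grad h p \<bullet> w"
proof -
  have "linear (frechet_derivative h (at p))"
    using assms frechet_derivative_works has_derivative_linear by blast
  then interpret linear "frechet_derivative h (at p)" .
  have "frechet_derivative h (at p) w = frechet_derivative h (at p) (\<Sum>b\<in>Basis. (w \<bullet> b) *\<^sub>R b)"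
    by (simp add: euclidean_representation)
  also have "\<dots> = (\<Sum>b\<in>Basis. (w \<bullet> b) * frechet_derivative h (at p) b)"
    by (simp add: sum scale)
  also have "\<dots> = grad h p \<bullet> w"
    by (simp add: grad_def inner_sum_right inner_commute mult.commute)
  finally show ?thesis .
qed

lemma grad_norm_lip:
  fixes h :: "'a::euclidean_space \<Rightarrow> real"
  assumes "h differentiable at p" "L-lipschitz_on UNIV h"
  shows "norm (grad h p) \<le> L"
proof -
  have D: "(h has_derivative frechet_derivative h (at p)) (at p)"
    using assms frechet_derivative_works by blast
  have "norm (grad h p) ^ 2 = frechet_derivative h (at p) (grad h p)"
    using grad_inner[OF assms(1)] by (simp add: power2_norm_eq_inner)
  also have "\<dots> \<le> norm (frechet_derivative h (at p) (grad h p))" by simp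
  also have "\<dots> \<le> L * norm (grad h p)" using deriv_lip_bound[OF D assms(2)] .
  finally have n: "norm (grad h p) * norm (grad h p) \<le> L * norm (grad h p)"
    by (simp add: power2_eq_square)
  show ?thesis
  proof (cases "grad h p = 0")
    case True then show ?thesis using lipschitz_on_nonneg[OF assms(2)] by simp
  next
    case False then show ?thesis using n by simp
  qed
qed

lemma sc_first_order:
  fixes \<phi> :: "'a::real_inner \<Rightarrow> real"
  assumes sc: "strongly_convex_on \<mu> UNIV \<phi>"
    and d: "\<And>y. (\<phi> has_derivative (\<lambda>w. G y \<bullet> w)) (at y)"
  shows "G v \<bullet> (u - v) \<le> \<phi> u - \<phi> v - \<mu> / 2 * (norm (u - v))\<^sup>2"
proof (rule le_eps_mult[where C = "norm (u - v) + \<bar>\<mu>\<bar> / 2 * (norm (u - v))\<^sup>2"])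
  show "0 \<le> norm (u - v) + \<bar>\<mu>\<bar> / 2 * (norm (u - v))\<^sup>2" by simp
next
  fix e :: real assume e: "e > 0"
  define N where "N = norm (u - v)"
  define A where "A = G v \<bullet> (u - v)"
  obtain d where d0: "d > 0" and dd: "\<forall>y. norm (y - v) < d \<longrightarrow> norm (\<phi> y - \<phi> v - G v \<bullet> (y - v)) \<le> e * norm (y - v)"
    using d[of v] e unfolding has_derivative_at_alt by blast
  define t where "t = min e (min (1/2) (d / (2 * (N + 1))))"
  have dN: "d / (2 * (N + 1)) > 0" using d0 by (simp add: N_def add_nonneg_pos)
  have t0: "t > 0" using e dN unfolding t_def by simp
  have te: "t \<le> e" unfolding t_def by (rule min.cobounded1)
  have t1: "t \<le> 1/2" unfolding t_def by (meson min.cobounded1 min.coboundedI2)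
  have "t * N \<le> (d / (2 * (N + 1))) * N" unfolding t_def N_def by (intro mult_right_mono) (simp_all add: min.coboundedI2)
  also have "\<dots> = d * (N / (2 * (N + 1)))" by simp
  also have "\<dots> < d * 1"
  proof (rule mult_strict_left_mono[OF _ d0])
    have "N \<ge> 0" by (simp add: N_def)
    then show "N / (2 * (N + 1)) < 1" by (simp add: pos_divide_less_eq)
  qed
  finally have tNd: "t * N < d" by simp
  define y where "y = v + t *\<^sub>R (u - v)"
  have ny: "norm (y - v) = t * N" using t0 by (simp add: y_def N_def)
  have 1: "norm (\<phi> y - \<phi> v - t * A) \<le> e * (t * N)"
    using dd[rule_format, of y] ny tNd by (simp add: y_def A_def)
  have a: "t * A \<le> \<phi> y - \<phi> v + e * (t * N)"
  proof -
    have "\<bar>\<phi> y - \<phi> v - t * A\<bar> \<le> e * (t * N)" using 1 by simp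
    then show ?thesis by arith
  qed
  have yeq: "y = t *\<^sub>R u + (1 - t) *\<^sub>R v" by (simp add: y_def algebra_simps)
  have b: "\<phi> y \<le> t * \<phi> u + (1 - t) * \<phi> v - \<mu> / 2 * t * (1 - t) * N\<^sup>2"
    using sc t0 t1 unfolding strongly_convex_on_def yeq N_def by auto
  have "t * A \<le> t * (\<phi> u - \<phi> v - \<mu> / 2 * (1 - t) * N\<^sup>2 + e * N)"
    using a b by (simp add: algebra_simps)
  then have c: "A \<le> \<phi> u - \<phi> v - \<mu> / 2 * (1 - t) * N\<^sup>2 + e * N"
    using t0 by simp
  have "\<mu> / 2 * t * N\<^sup>2 \<le> \<bar>\<mu>\<bar> / 2 * e * N\<^sup>2"
  proof -
    have "\<mu> / 2 * t * N\<^sup>2 \<le> \<bar>\<mu>\<bar> / 2 * t * N\<^sup>2" using t0 by (intro mult_right_mono) auto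
    also have "\<dots> \<le> \<bar>\<mu>\<bar> / 2 * e * N\<^sup>2" using te by (intro mult_right_mono mult_left_mono) auto
    finally show ?thesis .
  qed
  moreover have "\<mu> / 2 * (1 - t) * N\<^sup>2 = \<mu> / 2 * N\<^sup>2 - \<mu> / 2 * t * N\<^sup>2"
    by (simp add: right_diff_distrib left_diff_distrib)
  moreover have "e * (N + \<bar>\<mu>\<bar> / 2 * N\<^sup>2) = e * N + \<bar>\<mu>\<bar> / 2 * e * N\<^sup>2"
    by (simp add: algebra_simps)
  ultimately show "G v \<bullet> (u - v) \<le> \<phi> u - \<phi> v - \<mu> / 2 * (norm (u - v))\<^sup>2 + e * (norm (u - v) + \<bar>\<mu>\<bar> / 2 * (norm (u - v))\<^sup>2)"
    using c unfolding A_def[symmetric] N_def[symmetric] by linarith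
qed

lemma sc_monotone:
  fixes \<phi> :: "'a::real_inner \<Rightarrow> real"
  assumes sc: "strongly_convex_on \<mu> UNIV \<phi>"
    and d: "\<And>y. (\<phi> has_derivative (\<lambda>w. G y \<bullet> w)) (at y)"
  shows "\<mu> * (norm (u - v))\<^sup>2 \<le> (G u - G v) \<bullet> (u - v)"
proof -
  have 1: "G v \<bullet> (u - v) \<le> \<phi> u - \<phi> v - \<mu> / 2 * (norm (u - v))\<^sup>2"
    using sc_first_order[OF sc d] .
  have 2: "G u \<bullet> (v - u) \<le> \<phi> v - \<phi> u - \<mu> / 2 * (norm (v - u))\<^sup>2"
    using sc_first_order[OF sc d] .
  have "norm (v - u) = norm (u - v)" by (rule norm_minus_commute)
  moreover have "G u \<bullet> (v - u) = - (G u \<bullet> (u - v))" by (simp add: inner_diff_right)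
  ultimately show ?thesis using 1 2 by (simp add: inner_diff_left)
qed

lemma monotone_deriv_coercive:
  fixes G :: "'a::real_inner \<Rightarrow> 'a"
  assumes mono: "\<And>u v. \<mu> * (norm (u - v))\<^sup>2 \<le> (G u - G v) \<bullet> (u - v)"
    and D: "(G has_derivative G') (at y)"
  shows "\<mu> * (norm v)\<^sup>2 \<le> G' v \<bullet> v"
proof (rule le_eps_mult[where C = "(norm v)\<^sup>2"])
  fix e :: real assume e: "e > 0"
  have bl: "bounded_linear G'" using D by (simp add: has_derivative_at_alt)
  then interpret bounded_linear G' .
  obtain d where d0: "d > 0" and dd: "\<forall>z. norm (z - y) < d \<longrightarrow> norm (G z - G y - G' (z - y)) \<le> e * norm (z - y)"
    using D e unfolding has_derivative_at_alt by blast
  show "\<mu> * (norm v)\<^sup>2 \<le> G' v \<bullet> v + e * (norm v)\<^sup>2"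
  proof (cases "v = 0")
    case True then show ?thesis by (simp add: zero)
  next
    case False
    define s where "s = d / (2 * norm v)"
    have s0: "s > 0" using d0 False by (simp add: s_def)
    have sd: "norm (s *\<^sub>R v) < d" using d0 False by (simp add: s_def)
    define r where "r = G (y + s *\<^sub>R v) - G y - s *\<^sub>R G' v"
    have r: "norm r \<le> e * (s * norm v)"
      using dd[rule_format, of "y + s *\<^sub>R v"] sd s0 by (simp add: r_def scale)
    have m: "\<mu> * (s * norm v)\<^sup>2 \<le> (G (y + s *\<^sub>R v) - G y) \<bullet> (s *\<^sub>R v)"
      using mono[of "y + s *\<^sub>R v" y] s0 by simp
    have eq: "(G (y + s *\<^sub>R v) - G y) \<bullet> (s *\<^sub>R v) = s * s * (G' v \<bullet> v) + s * (r \<bullet> v)"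
      by (simp add: r_def algebra_simps inner_diff_left)
    have "r \<bullet> v \<le> norm r * norm v" by (rule norm_cauchy_schwarz)
    also have "\<dots> \<le> e * (s * norm v) * norm v" using r by (intro mult_right_mono) auto
    finally have rv: "r \<bullet> v \<le> s * (e * (norm v)\<^sup>2)" by (simp add: power2_eq_square algebra_simps)
    have srv: "s * (r \<bullet> v) \<le> s * (s * (e * (norm v)\<^sup>2))"
      using rv s0 by (intro mult_left_mono) auto
    have sq: "(s * norm v)\<^sup>2 = s * s * (norm v)\<^sup>2" by (simp add: power_mult_distrib power2_eq_square)
    have h1: "\<mu> * (s * s * (norm v)\<^sup>2) \<le> s * s * (G' v \<bullet> v) + s * (s * (e * (norm v)\<^sup>2))"
      using m eq srv unfolding sq by linarith
    have "(s * s) * (\<mu> * (norm v)\<^sup>2) \<le> (s * s) * (G' v \<bullet> v + e * (norm v)\<^sup>2)"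
      using h1 by (simp only: distrib_left mult_ac)
    moreover have "s * s > 0" using s0 by simp
    ultimately show ?thesis by (rule mult_left_le_imp_le)
  qed
qed simp

lemma hess_deriv:
  assumes "grad h differentiable at p"
  shows "(grad h has_derivative hess h p) (at p)"
  using assms unfolding hess_def by (simp add: frechet_derivative_works[symmetric])

lemma bl_fst0:
  assumes H: "bounded_linear H"
  shows "bounded_linear (\<lambda>v. fst (H (0, v)))"
proof -
  have "bounded_linear (\<lambda>v. (0::'a::real_normed_vector, v::'b::real_normed_vector))"
    by (rule bounded_linear_Pair[OF bounded_linear_zero bounded_linear_ident])
  then have "bounded_linear (\<lambda>v. H (0, v))" using bounded_linear_compose[OF H] by blast
  then show ?thesis using bounded_linear_compose[OF bounded_linear_fst] by blast
qed

lemma bl_snd0: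
  assumes H: "bounded_linear H"
  shows "bounded_linear (\<lambda>v. snd (H (0, v)))"
proof -
  have "bounded_linear (\<lambda>v. (0::'a::real_normed_vector, v::'b::real_normed_vector))"
    by (rule bounded_linear_Pair[OF bounded_linear_zero bounded_linear_ident])
  then have "bounded_linear (\<lambda>v. H (0, v))" using bounded_linear_compose[OF H] by blast
  then show ?thesis using bounded_linear_compose[OF bounded_linear_snd] by blast
qed

lemma hess12_apply:
  fixes h :: "(real^'n) \<times> (real^'m) \<Rightarrow> real"
  assumes "grad h differentiable at p"
  shows "hess12 h p *v v = fst (hess h p (0, v))"
proof -
  have bl: "bounded_linear (hess h p)" using hess_deriv[OF assms] has_derivative_bounded_linear by blast
  have "(\<lambda>v. matrix (\<lambda>v. fst (hess h p (0, v))) *v v) = (\<lambda>v. fst (hess h p (0, v)))"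
    by (rule matrix_vector_mul(3)[OF bl_fst0[OF bl]])
  then show ?thesis unfolding hess12_def by (rule fun_cong[where x=v, THEN trans]) simp
qed

lemma hess22_apply:
  fixes h :: "(real^'n) \<times> (real^'m) \<Rightarrow> real"
  assumes "grad h differentiable at p"
  shows "hess22 h p *v v = snd (hess h p (0, v))"
proof -
  have bl: "bounded_linear (hess h p)" using hess_deriv[OF assms] has_derivative_bounded_linear by blast
  have "(\<lambda>v. matrix (\<lambda>v. snd (hess h p (0, v))) *v v) = (\<lambda>v. snd (hess h p (0, v)))"
    by (rule matrix_vector_mul(3)[OF bl_snd0[OF bl]])
  then show ?thesis unfolding hess22_def by (rule fun_cong[where x=v, THEN trans]) simp
qed

lemma hess22_coercive:
  fixes h :: "(real^'n) \<times> (real^'m) \<Rightarrow> real"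
  assumes d1: "\<And>q. h differentiable at q" and d2: "\<And>q. grad h differentiable at q"
    and sc: "strongly_convex_on \<mu> UNIV (\<lambda>y. h (x, y))"
  shows "\<mu> * (norm v)\<^sup>2 \<le> v \<bullet> (hess22 h (x, y) *v v)"
proof -
  have pair: "((\<lambda>y. (x, y)) has_derivative (\<lambda>v. (0, v))) (at y')" for y' :: "real^'m"
    by (intro has_derivative_Pair has_derivative_const has_derivative_ident)
  have dphi: "((\<lambda>y. h (x, y)) has_derivative (\<lambda>w. grad2 h (x, y') \<bullet> w)) (at y')" for y'
  proof -
    have "(h has_derivative frechet_derivative h (at (x, y'))) (at (x, y'))"
      using d1 frechet_derivative_works by blast
    from has_derivative_compose[OF pair this]
    have "((\<lambda>y. h (x, y)) has_derivative (\<lambda>w. frechet_derivative h (at (x, y')) (0, w))) (at y')" .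
    moreover have "frechet_derivative h (at (x, y')) (0, w) = grad2 h (x, y') \<bullet> w" for w
    proof -
      obtain a b where ab: "grad h (x, y') = (a, b)" by (cases "grad h (x, y')")
      show ?thesis unfolding grad_inner[OF d1] grad2_def ab by (simp add: inner_Pair)
    qed
    ultimately show ?thesis by simp
  qed
  have mono: "\<mu> * (norm (u - w))\<^sup>2 \<le> (grad2 h (x, u) - grad2 h (x, w)) \<bullet> (u - w)" for u w
    using sc_monotone[OF sc dphi] .
  have "((\<lambda>y. grad h (x, y)) has_derivative (\<lambda>v. hess h (x, y) (0, v))) (at y)"
    using has_derivative_compose[OF pair hess_deriv[OF d2]] .
  then have dG: "((\<lambda>y. grad2 h (x, y)) has_derivative (\<lambda>v. snd (hess h (x, y) (0, v)))) (at y)"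
    unfolding grad2_def by (rule has_derivative_snd)
  have "\<mu> * (norm v)\<^sup>2 \<le> snd (hess h (x, y) (0, v)) \<bullet> v"
    using monotone_deriv_coercive[OF mono dG] .
  then show ?thesis using hess22_apply[OF d2] by (simp add: inner_commute)
qed

lemma coercive_inv:
  fixes B :: "real^'m^'m"
  assumes mu: "\<mu> > 0" and co: "\<And>v. \<mu> * (norm v)\<^sup>2 \<le> v \<bullet> (B *v v)"
  shows "B *v (matrix_inv B *v w) = w" and "\<mu> * norm z \<le> norm (B *v z)"
proof -
  have ker: "\<forall>v. B *v v = 0 \<longrightarrow> v = 0"
  proof (intro allI impI)
    fix v assume "B *v v = 0"
    then have "\<mu> * (norm v)\<^sup>2 \<le> 0" using co[of v] by simp
    then show "v = 0" using mu by (simp add: mult_le_0_iff)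
  qed
  then have "invertible B"
    by (subst invertible_left_inverse, subst matrix_left_invertible_ker) (rule ker)
  then have "B ** matrix_inv B = mat 1 \<and> matrix_inv B ** B = mat 1"
    unfolding invertible_def matrix_inv_def by (rule someI_ex)
  then show "B *v (matrix_inv B *v w) = w"
    by (simp add: matrix_vector_mul_assoc)
  have "\<mu> * (norm z)\<^sup>2 \<le> norm z * norm (B *v z)"
    using co[of z] norm_cauchy_schwarz[of z "B *v z"] by linarith
  then have "norm z * (\<mu> * norm z) \<le> norm z * norm (B *v z)"
    by (simp add: power2_eq_square mult_ac)
  then show "\<mu> * norm z \<le> norm (B *v z)"
    by (cases "z = 0") auto
qed

lemma norm_fst_le': "norm (fst z) \<le> norm z"
  using norm_fst_le[of "fst z" "snd z"] by simp

lemma norm_snd_le': "norm (snd z) \<le> norm z"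
  using norm_snd_le[of "snd z" "fst z"] by simp

lemma ag_rearrange: "(a::'a::ab_group_add) - x - (b - y) = (a - b) - ((x - t) + (t - y))"
  by (simp add: algebra_simps)

lemma pointwise:
  fixes hf hg :: "(real^'n) \<times> (real^'m) \<Rightarrow> real"
  assumes fd1: "\<And>q. hf differentiable at q" and fd2: "\<And>q. grad hf differentiable at q"
    and gd1: "\<And>q. hg differentiable at q" and gd2: "\<And>q. grad hg differentiable at q"
    and f0: "Lf0-lipschitz_on UNIV hf" and f1: "Lf1-lipschitz_on UNIV (grad hf)"
    and g1: "Lg1-lipschitz_on UNIV (grad hg)"
    and g2: "\<And>p q. onorm (\<lambda>w. hess hg p w - hess hg q w) \<le> Lg2 * dist p q"
    and mu: "\<mu> > 0" and sc: "\<And>x'. strongly_convex_on \<mu> UNIV (\<lambda>y. hg (x', y))"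
  shows "norm ((grad1 hf (x,y1) - hess12 hg (x,y1) *v (matrix_inv (hess22 hg (x,y1)) *v grad2 hf (x,y1)))
            - (grad1 hf (x,y2) - hess12 hg (x,y2) *v (matrix_inv (hess22 hg (x,y2)) *v grad2 hf (x,y2))))
         \<le> (Lf1 + Lg2 * Lf0 / \<mu> + Lg2 * Lg1 * Lf0 / \<mu>\<^sup>2 + Lf1 * Lg1 / \<mu>) * norm (y1 - y2)"
proof (cases "y1 = y2")
  case True then show ?thesis by simp
next
  case False
  define p1 where "p1 = (x, y1)"
  define p2 where "p2 = (x, y2)"
  define d where "d = norm (y1 - y2)"
  have d0: "d > 0" using False by (simp add: d_def)
  have dp: "dist p1 p2 = d" by (simp add: p1_def p2_def d_def dist_Pair_Pair dist_norm)
  define v1 where "v1 = grad2 hf p1"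
  define v2 where "v2 = grad2 hf p2"
  define B1 where "B1 = hess22 hg p1"
  define B2 where "B2 = hess22 hg p2"
  define A1 where "A1 = hess12 hg p1"
  define A2 where "A2 = hess12 hg p2"
  define a1 where "a1 = matrix_inv B1 *v v1"
  define a2 where "a2 = matrix_inv B2 *v v2"
  have co1: "\<mu> * (norm v)\<^sup>2 \<le> v \<bullet> (B1 *v v)" for v
    unfolding B1_def p1_def by (rule hess22_coercive[OF gd1 gd2 sc])
  have co2: "\<mu> * (norm v)\<^sup>2 \<le> v \<bullet> (B2 *v v)" for v
    unfolding B2_def p2_def by (rule hess22_coercive[OF gd1 gd2 sc])
  have Ba1: "B1 *v a1 = v1" unfolding a1_def by (rule coercive_inv(1)[OF mu co1])
  have Ba2: "B2 *v a2 = v2" unfolding a2_def by (rule coercive_inv(1)[OF mu co2])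
  have inv2: "\<mu> * norm z \<le> norm (B2 *v z)" for z by (rule coercive_inv(2)[OF mu co2])
  have inv1: "\<mu> * norm z \<le> norm (B1 *v z)" for z by (rule coercive_inv(2)[OF mu co1])
  have Lf0: "0 \<le> Lf0" using f0 by (rule lipschitz_on_nonneg)
  have Lf1: "0 \<le> Lf1" using f1 by (rule lipschitz_on_nonneg)
  have Lg1: "0 \<le> Lg1" using g1 by (rule lipschitz_on_nonneg)
  have blH: "bounded_linear (hess hg p)" for p
    using hess_deriv[OF gd2] has_derivative_bounded_linear by blast
  have blD: "bounded_linear (\<lambda>w. hess hg p1 w - hess hg p2 w)"
    by (intro bounded_linear_sub blH)
  have Lg2: "0 \<le> Lg2"
  proof -
    have "0 \<le> onorm (\<lambda>w. hess hg p1 w - hess hg p2 w)" by (rule onorm_pos_le[OF blD])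
    also have "\<dots> \<le> Lg2 * d" using g2[of p1 p2] dp by simp
    finally show ?thesis using d0 by (simp add: zero_le_mult_iff)
  qed
  have Hd: "norm (hess hg p1 w - hess hg p2 w) \<le> Lg2 * d * norm w" for w
  proof -
    have "norm (hess hg p1 w - hess hg p2 w) \<le> onorm (\<lambda>w. hess hg p1 w - hess hg p2 w) * norm w"
      using onorm[OF blD] by simp
    also have "\<dots> \<le> Lg2 * d * norm w" using g2[of p1 p2] dp by (intro mult_right_mono) auto
    finally show ?thesis .
  qed
  have Ad: "norm (A1 *v a - A2 *v a) \<le> Lg2 * d * norm a" for a
  proof -
    have "A1 *v a - A2 *v a = fst (hess hg p1 (0, a) - hess hg p2 (0, a))"
      unfolding A1_def A2_def by (simp add: hess12_apply[OF gd2])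
    then have "norm (A1 *v a - A2 *v a) \<le> norm (hess hg p1 (0, a) - hess hg p2 (0, a))"
      using norm_fst_le' by metis
    also have "\<dots> \<le> Lg2 * d * norm (0::real^'n, a)" by (rule Hd)
    finally show ?thesis by (simp add: norm_Pair)
  qed
  have Bd: "norm (B2 *v a - B1 *v a) \<le> Lg2 * d * norm a" for a
  proof -
    have "B1 *v a - B2 *v a = snd (hess hg p1 (0, a) - hess hg p2 (0, a))"
      unfolding B1_def B2_def by (simp add: hess22_apply[OF gd2])
    then have "norm (B1 *v a - B2 *v a) \<le> norm (hess hg p1 (0, a) - hess hg p2 (0, a))"
      using norm_snd_le' by metis
    also have "\<dots> \<le> Lg2 * d * norm (0::real^'n, a)" by (rule Hd)
    finally show ?thesis by (simp add: norm_Pair norm_minus_commute)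
  qed
  have A2b: "norm (A2 *v w) \<le> Lg1 * norm w" for w
  proof -
    have "norm (A2 *v w) \<le> norm (hess hg p2 (0, w))"
      unfolding A2_def by (simp add: hess12_apply[OF gd2] norm_fst_le')
    also have "\<dots> \<le> Lg1 * norm (0::real^'n, w)"
      by (rule deriv_lip_bound[OF hess_deriv[OF gd2] g1])
    finally show ?thesis by (simp add: norm_Pair)
  qed
  have v1b: "norm v1 \<le> Lf0"
  proof -
    have "norm v1 \<le> norm (grad hf p1)" unfolding v1_def grad2_def by (rule norm_snd_le')
    also have "\<dots> \<le> Lf0" by (rule grad_norm_lip[OF fd1 f0])
    finally show ?thesis .
  qed
  have gdiff: "norm (grad hf p1 - grad hf p2) \<le> Lf1 * d"
    using lipschitz_onD[OF f1, of p1 p2] dp by (simp add: dist_norm)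
  have vd: "norm (v1 - v2) \<le> Lf1 * d"
    using order_trans[OF norm_snd_le'[of "grad hf p1 - grad hf p2"] gdiff]
    by (simp add: v1_def v2_def grad2_def)
  have g1d: "norm (grad1 hf p1 - grad1 hf p2) \<le> Lf1 * d"
    using order_trans[OF norm_fst_le'[of "grad hf p1 - grad hf p2"] gdiff]
    by (simp add: grad1_def)
  have a1b: "norm a1 \<le> Lf0 / \<mu>"
    using inv1[of a1] Ba1 v1b mu by (simp add: pos_le_divide_eq mult.commute)
  have "B2 *v (a1 - a2) = (B2 *v a1 - B1 *v a1) + (v1 - v2)"
    using Ba1 Ba2 by (simp add: matrix_vector_mult_diff_distrib)
  then have "\<mu> * norm (a1 - a2) \<le> norm (B2 *v a1 - B1 *v a1) + norm (v1 - v2)"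
    using inv2[of "a1 - a2"] norm_triangle_ineq[of "B2 *v a1 - B1 *v a1" "v1 - v2"] by simp
  also have "\<dots> \<le> Lg2 * d * norm a1 + Lf1 * d" using Bd[of a1] vd by simp
  also have "\<dots> \<le> Lg2 * d * (Lf0 / \<mu>) + Lf1 * d"
    using mult_left_mono[OF a1b, of "Lg2 * d"] Lg2 d0 by simp
  finally have add: "norm (a1 - a2) \<le> (Lg2 * d * (Lf0 / \<mu>) + Lf1 * d) / \<mu>"
    using mu by (simp add: pos_le_divide_eq mult.commute)
  have split: "(grad1 hf p1 - A1 *v a1) - (grad1 hf p2 - A2 *v a2)
      = (grad1 hf p1 - grad1 hf p2) - ((A1 *v a1 - A2 *v a1) + A2 *v (a1 - a2))"
    unfolding matrix_vector_mult_diff_distrib by (rule ag_rearrange)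
  have "norm ((grad1 hf p1 - A1 *v a1) - (grad1 hf p2 - A2 *v a2))
      \<le> norm (grad1 hf p1 - grad1 hf p2) + (norm (A1 *v a1 - A2 *v a1) + norm (A2 *v (a1 - a2)))"
    unfolding split
    using norm_triangle_ineq4[of "grad1 hf p1 - grad1 hf p2" "(A1 *v a1 - A2 *v a1) + A2 *v (a1 - a2)"]
      norm_triangle_ineq[of "A1 *v a1 - A2 *v a1" "A2 *v (a1 - a2)"] by linarith
  also have "\<dots> \<le> Lf1 * d + (Lg2 * d * (Lf0 / \<mu>) + Lg1 * ((Lg2 * d * (Lf0 / \<mu>) + Lf1 * d) / \<mu>))"
  proof -
    have "norm (A1 *v a1 - A2 *v a1) \<le> Lg2 * d * (Lf0 / \<mu>)"
      using Ad[of a1] a1b Lg2 d0 by (meson order_trans mult_left_mono zero_le_mult_iff less_imp_le)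
    moreover have "norm (A2 *v (a1 - a2)) \<le> Lg1 * ((Lg2 * d * (Lf0 / \<mu>) + Lf1 * d) / \<mu>)"
      using A2b[of "a1 - a2"] add Lg1 by (meson order_trans mult_left_mono)
    ultimately show ?thesis using g1d by linarith
  qed
  also have "\<dots> = (Lf1 + Lg2 * Lf0 / \<mu> + Lg2 * Lg1 * Lf0 / \<mu>\<^sup>2 + Lf1 * Lg1 / \<mu>) * d"
    using mu by (simp add: field_simps power2_eq_square)
  finally show ?thesis
    unfolding p1_def p2_def d_def A1_def A2_def a1_def a2_def B1_def B2_def v1_def v2_def .
qed

theorem proposition1:
  fixes P :: "((real^'dxi) \<times> (real^'deta)) measure"
    and K :: "real^'dxi \<Rightarrow> (real^'deta) measure"
    and f g :: "real^'dx \<Rightarrow> real^'dy \<Rightarrow> real^'dxi \<Rightarrow> real^'deta \<Rightarrow> real"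
    and Lf0 Lf1 Lg1 Lg2 \<mu> \<sigma>f \<sigma>g1 \<sigma>g2 :: real
    and ystar :: "real^'dx \<Rightarrow> real^'dxi \<Rightarrow> real^'dy"
    and \<Phi> :: "real^'dxi \<Rightarrow> real^'N"
    and Wstar :: "real^'dx \<Rightarrow> real^'N^'dy"
    and x :: "real^'dx"
  defines "Pxi \<equiv> distr P borel fst"
  defines "Xi \<equiv> msupport Pxi"
  defines "G \<equiv> (\<lambda>x' y \<xi>. \<integral>\<eta>. g x' y \<xi> \<eta> \<partial>K \<xi>)"
  defines "GPhi \<equiv> (\<lambda>x' W. \<integral>z. g x' (W *v \<Phi> (fst z)) (fst z) (snd z) \<partial>P)"
  assumes P_prob: "prob_space P" and P_sets: "sets P = sets borel"
    and K_kernel: "K \<in> borel \<rightarrow>\<^sub>M prob_algebra borel"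
    and K_cond: "\<forall>A\<in>sets borel. emeasure P A = (\<integral>\<^sup>+\<xi>. emeasure (K \<xi>) (Pair \<xi> -` A) \<partial>Pxi)"
    \<comment> \<open>twice differentiability in (x,y)\<close>
    and f_diff: "\<forall>\<xi>\<in>Xi. \<forall>\<eta> p. sec f \<xi> \<eta> differentiable at p \<and> grad (sec f \<xi> \<eta>) differentiable at p"
    and g_diff: "\<forall>\<xi>\<in>Xi. \<forall>\<eta> p. sec g \<xi> \<eta> differentiable at p \<and> grad (sec g \<xi> \<eta>) differentiable at p"
    \<comment> \<open>Assumption 1 (i)\<close>
    and f_lip: "\<forall>\<xi>\<in>Xi. \<forall>\<eta>. Lf0-lipschitz_on UNIV (sec f \<xi> \<eta>)"
    and gradf_lip: "\<forall>\<xi>\<in>Xi. \<forall>\<eta>. Lf1-lipschitz_on UNIV (grad (sec f \<xi> \<eta>))"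
    and gradg_lip: "\<forall>\<xi>\<in>Xi. \<forall>\<eta>. Lg1-lipschitz_on UNIV (grad (sec g \<xi> \<eta>))"
    and hessg_lip: "\<forall>\<xi>\<in>Xi. \<forall>\<eta>. \<forall>p q. onorm (\<lambda>w. hess (sec g \<xi> \<eta>) p w - hess (sec g \<xi> \<eta>) q w) \<le> Lg2 * dist p q"
    \<comment> \<open>Assumption 1 (ii)\<close>
    and mu_pos: "\<mu> > 0"
    and g_sc: "\<forall>\<xi>\<in>Xi. \<forall>\<eta> x'. strongly_convex_on \<mu> UNIV (\<lambda>y. g x' y \<xi> \<eta>)"
    \<comment> \<open>Assumption 1 (iii): unbiasedness and bounded conditional variances\<close>
    and f_unb: "\<forall>\<xi>\<in>Xi. \<forall>p. (\<integral>\<eta>. grad (sec f \<xi> \<eta>) p \<partial>K \<xi>)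
                            = grad (\<lambda>q. \<integral>\<eta>. sec f \<xi> \<eta> q \<partial>K \<xi>) p"
    and f_var: "\<forall>\<xi>\<in>Xi. \<forall>p. (\<integral>\<eta>. (norm (grad (sec f \<xi> \<eta>) p - (\<integral>\<eta>'. grad (sec f \<xi> \<eta>') p \<partial>K \<xi>)))\<^sup>2 \<partial>K \<xi>)
                            \<le> \<sigma>f\<^sup>2"
    and g1_unb: "\<forall>\<xi>\<in>Xi. \<forall>p. (\<integral>\<eta>. grad (sec g \<xi> \<eta>) p \<partial>K \<xi>)
                            = grad (\<lambda>q. \<integral>\<eta>. sec g \<xi> \<eta> q \<partial>K \<xi>) p"
    and g1_var: "\<forall>\<xi>\<in>Xi. \<forall>p. (\<integral>\<eta>. (norm (grad (sec g \<xi> \<eta>) p - (\<integral>\<eta>'. grad (sec g \<xi> \<eta>') p \<partial>K \<xi>)))\<^sup>2 \<partial>K \<xi>)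
                            \<le> \<sigma>g1\<^sup>2"
    and g2_unb: "\<forall>\<xi>\<in>Xi. \<forall>p w. (\<integral>\<eta>. hess (sec g \<xi> \<eta>) p w \<partial>K \<xi>)
                            = hess (\<lambda>q. \<integral>\<eta>. sec g \<xi> \<eta> q \<partial>K \<xi>) p w"
    and g2_var: "\<forall>\<xi>\<in>Xi. \<forall>p. (\<integral>\<eta>. (onorm (\<lambda>w. hess (sec g \<xi> \<eta>) p w
                               - (\<integral>\<eta>'. hess (sec g \<xi> \<eta>') p w \<partial>K \<xi>)))\<^sup>2 \<partial>K \<xi>)
                            \<le> \<sigma>g2\<^sup>2"
    \<comment> \<open>lower-level solutions\<close>
    and ystar_min: "\<forall>x'. \<forall>\<xi>\<in>Xi. \<forall>y. G x' (ystar x' \<xi>) \<xi> \<le> G x' y \<xi>"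
    and Wstar_min: "\<forall>x'. \<forall>W. GPhi x' (Wstar x') \<le> GPhi x' W"
    \<comment> \<open>the expectations involved exist\<close>
    and int_F: "integrable P (\<lambda>z. hyper_integrand f g x (ystar x (fst z)) (fst z) (snd z))"
    and int_FPhi: "integrable P (\<lambda>z. hyper_integrand f g x (Wstar x *v \<Phi> (fst z)) (fst z) (snd z))"
    and int_err: "integrable Pxi (\<lambda>\<xi>. norm (Wstar x *v \<Phi> \<xi> - ystar x \<xi>))"
  shows "norm (hypergrad P f g x (ystar x) - hypergrad P f g x (\<lambda>\<xi>. Wstar x *v \<Phi> \<xi>))
         \<le> (Lf1 + Lg2 * Lf0 / \<mu> + Lg2 * Lg1 * Lf0 / \<mu>\<^sup>2 + Lf1 * Lg1 / \<mu>)
            * (\<integral>\<xi>. norm (Wstar x *v \<Phi> \<xi> - ystar x \<xi>) \<partial>Pxi)"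
proof -
  define e where "e = (\<lambda>\<xi>. norm (Wstar x *v \<Phi> \<xi> - ystar x \<xi>))"
  define Kc where "Kc = Lf1 + Lg2 * Lf0 / \<mu> + Lg2 * Lg1 * Lf0 / \<mu>\<^sup>2 + Lf1 * Lg1 / \<mu>"
  define F1 where "F1 = (\<lambda>z. hyper_integrand f g x (ystar x (fst z)) (fst z) (snd z))"
  define F2 where "F2 = (\<lambda>z. hyper_integrand f g x (Wstar x *v \<Phi> (fst z)) (fst z) (snd z))"
  have fstB: "fst \<in> (borel :: ((real^'dxi) \<times> (real^'deta)) measure) \<rightarrow>\<^sub>M borel"
    using measurable_fst[of "borel :: (real^'dxi) measure" "borel :: (real^'deta) measure"]
    by (simp add: borel_prod)
  have fstP: "fst \<in> P \<rightarrow>\<^sub>M borel"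
    by (subst measurable_cong_sets[OF P_sets refl]) (rule fstB)
  have setsPxi: "sets Pxi = sets borel" unfolding Pxi_def by simp
  have eB: "e \<in> borel_measurable borel"
  proof -
    have "e \<in> borel_measurable Pxi" using borel_measurable_integrable[OF int_err] unfolding e_def .
    then show ?thesis by (subst (asm) measurable_cong_sets[OF setsPxi refl])
  qed
  have pw: "norm (F1 z - F2 z) \<le> Kc * e (fst z)" if xi: "fst z \<in> Xi" for z
  proof -
    obtain \<xi> \<eta> where z: "z = (\<xi>, \<eta>)" by (cases z)
    have xi': "\<xi> \<in> Xi" using xi z by simp
    have sc': "strongly_convex_on \<mu> UNIV (\<lambda>y. sec g \<xi> \<eta> (x', y))" for x'
    proof -
      have "(\<lambda>y. sec g \<xi> \<eta> (x', y)) = (\<lambda>y. g x' y \<xi> \<eta>)" by (simp add: sec_def)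
      then show ?thesis using g_sc xi' by simp
    qed
    have "norm (F1 z - F2 z) \<le> Kc * norm (ystar x \<xi> - Wstar x *v \<Phi> \<xi>)"
      unfolding F1_def F2_def z Kc_def hyper_integrand_def fst_conv snd_conv
      by (rule pointwise[where hf = "sec f \<xi> \<eta>" and hg = "sec g \<xi> \<eta>"])
        (use f_diff g_diff f_lip gradf_lip gradg_lip hessg_lip mu_pos sc' xi' in auto)
    then show ?thesis unfolding e_def z by (simp add: norm_minus_commute)
  qed
  have AEXi: "AE z in P. fst z \<in> Xi"
  proof -
    obtain B :: "(real^'dxi) set set" where B: "countable B" "topological_basis B"
      using ex_countable_basis by blast
    define B0 where "B0 = {b\<in>B. emeasure Pxi b = 0}"
    have cB0: "countable B0" using B(1) unfolding B0_def by simp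
    have "AE z in P. fst z \<notin> b" if b: "b \<in> B0" for b
    proof -
      have ob: "open b" using B(2) b unfolding B0_def by (auto simp: topological_basis_def)
      then have bB: "b \<in> sets borel" by simp
      define N where "N = fst -` b \<inter> space P"
      have "emeasure P N = emeasure Pxi b"
        unfolding N_def Pxi_def by (rule emeasure_distr[OF fstP bB, symmetric])
      also have "\<dots> = 0" using b unfolding B0_def by simp
      finally have "N \<in> null_sets P"
        using measurable_sets[OF fstP bB] unfolding N_def by auto
      from AE_not_in[OF this] have "AE z in P. z \<notin> N" .
      then show ?thesis using AE_space[of P] unfolding N_def by eventually_elim auto
    qed
    then have "AE z in P. \<forall>b\<in>B0. fst z \<notin> b"
      by (subst AE_ball_countable[OF cB0]) blast
    then show ?thesis
    proof (rule eventually_mono)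
      fix z assume nb: "\<forall>b\<in>B0. fst z \<notin> b"
      show "fst z \<in> Xi"
      proof (rule ccontr)
        assume "fst z \<notin> Xi"
        then obtain r where r: "r > 0" "\<not> emeasure Pxi (ball (fst z) r) > 0"
          unfolding Xi_def msupport_def by auto
        then have r0: "emeasure Pxi (ball (fst z) r) = 0" by (simp add: zero_less_iff_neq_zero)
        obtain b where b: "b \<in> B" "fst z \<in> b" "b \<subseteq> ball (fst z) r"
          using topological_basisE[OF B(2) open_ball, of "fst z" "fst z" r] r(1) by auto
        have "open b" using B(2) b(1) by (auto simp: topological_basis_def)
        then have "emeasure Pxi b \<le> emeasure Pxi (ball (fst z) r)"
          using b(3) by (intro emeasure_mono) (auto simp: setsPxi)
        then have "b \<in> B0" using r0 b(1) unfolding B0_def by simp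
        then show False using nb b(2) by blast
      qed
    qed
  qed
  have intd: "integrable P (\<lambda>z. norm (F1 z - F2 z))"
    unfolding F1_def F2_def
    by (rule integrable_norm[OF Bochner_Integration.integrable_diff[OF int_F int_FPhi]])
  have inte: "integrable P (\<lambda>z. e (fst z))"
    using int_err integrable_distr_eq[OF fstP eB] unfolding Pxi_def e_def by simp
  have "norm (hypergrad P f g x (ystar x) - hypergrad P f g x (\<lambda>\<xi>. Wstar x *v \<Phi> \<xi>))
      = norm (\<integral>z. F1 z - F2 z \<partial>P)"
    unfolding hypergrad_def F1_def F2_def using int_F int_FPhi by simp
  also have "\<dots> \<le> (\<integral>z. norm (F1 z - F2 z) \<partial>P)" by (rule integral_norm_bound)
  also have "\<dots> \<le> (\<integral>z. Kc * e (fst z) \<partial>P)"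
    using intd inte AEXi pw by (intro integral_mono_AE) (auto elim: eventually_mono)
  also have "\<dots> = Kc * (\<integral>z. e (fst z) \<partial>P)" by (rule integral_mult_right_zero)
  also have "(\<integral>z. e (fst z) \<partial>P) = (\<integral>\<xi>. e \<xi> \<partial>Pxi)"
    unfolding Pxi_def by (rule integral_distr[OF fstP eB, symmetric])
  finally show ?thesis unfolding Kc_def e_def .
qed

end
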